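(* Let $\mathfrak{M}$ be a model, $x$ a variable, $f$ any Boolean expression in $n$ arguments, $\theta,\varphi_1,\dots,\varphi_n$ formulas, $z_1,\dots,z_m$ variables distinct from $x$ none of which occurs free in $\theta$, and $Q_1,\dots,Q_m\in\{\forall,\exists\}$. If every $\varphi_i$ is non-dependent of $x$ in $\mathfrak{M}$ provided $\theta$, then $$[\![\exists x\theta\to Q_mz_m\dots Q_1z_1\,f\big(\forall x(\theta\to\varphi_1),\dots,\forall x(\theta\to\varphi_n)\big)]\!]^{\mathfrak{M}}=[\![\forall x\big(\theta\to Q_mz_m\dots Q_1z_1\,f(\varphi_1,\dots,\varphi_n)\big)]\!]^{\mathfrak{M}},$$ and hence, if moreover $\mathfrak{M}\models\exists x\theta$, then $$[\![Q_mz_m\dots Q_1z_1\,f\big(\forall x(\theta\to\varphi_1),\dots,\forall x(\theta\to\varphi_n)\big)]\!]^{\mathfrak{M}}=[\![\forall x\big(\theta\to Q_mz_m\dots Q_1z_1\,f(\varphi_1,\dots,\varphi_n)\big)]\!]^{\mathfrak{M}}.$$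
   Context: Work in first-order logic with equality over a relational signature, with countably many variables $v_1,v_2,\dots$. A model $\mathfrak{M}$ has nonempty universe $M$; assignments are $\bar a\in M^\omega$ ($a_i$ is the value of $v_i$); for $x=v_i$, $b\in M$, $\bar a^x_b$ is $\bar a$ with $i$-th entry replaced by $b$. $[\![\varphi]\!]^{\mathfrak{M}}=\{\bar a\in M^\omega:\mathfrak{M}\models\varphi[\bar a]\}$; $\mathfrak{M}\models\chi$ means every $\bar a$ satisfies $\chi$. A Boolean expression is built from its arguments using $\neg$ and $\land$ (and hence any Boolean connectives). Definition: $\varphi$ is non-dependent of $x$ in $\mathfrak{M}$ provided $\theta$ iff for all $\bar a\in M^\omega$, $b\in M$: if $\mathfrak{M}\models\theta[\bar a]$ and $\mathfrak{M}\models\theta[\bar a^x_b]$ then ($\mathfrak{M}\models\varphi[\bar a]\iff\mathfrak{M}\models\varphi[\bar a^x_b]$). *)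

theory Defs
  imports Main
begin

datatype 'r fm =
    Eq nat nat
  | Rel 'r "nat list"
  | Neg "'r fm"
  | Conj "'r fm" "'r fm"
  | All nat "'r fm"

definition Imp :: "'r fm \<Rightarrow> 'r fm \<Rightarrow> 'r fm" where
  "Imp p q = Neg (Conj p (Neg q))"

definition Ex :: "nat \<Rightarrow> 'r fm \<Rightarrow> 'r fm" where
  "Ex x p = Neg (All x (Neg p))"

fun freevars :: "'r fm \<Rightarrow> nat set" where
  "freevars (Eq x y) = {x, y}"
| "freevars (Rel R xs) = set xs"
| "freevars (Neg p) = freevars p"
| "freevars (Conj p q) = freevars p \<union> freevars q"
| "freevars (All x p) = freevars p - {x}"

text \<open>A model is a universe M (nonempty) with an interpretation I of relation symbols.
Assignments are a :: nat \<Rightarrow> 'a (a i is the value of v_i).\<close>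

fun sat :: "'a set \<Rightarrow> ('r \<Rightarrow> 'a list \<Rightarrow> bool) \<Rightarrow> (nat \<Rightarrow> 'a) \<Rightarrow> 'r fm \<Rightarrow> bool" where
  "sat M I a (Eq x y) = (a x = a y)"
| "sat M I a (Rel R xs) = I R (map a xs)"
| "sat M I a (Neg p) = (\<not> sat M I a p)"
| "sat M I a (Conj p q) = (sat M I a p \<and> sat M I a q)"
| "sat M I a (All x p) = (\<forall>b\<in>M. sat M I (a(x := b)) p)"

definition assigns :: "'a set \<Rightarrow> (nat \<Rightarrow> 'a) set" where
  "assigns M = {a. \<forall>i. a i \<in> M}"

definition meaning :: "'a set \<Rightarrow> ('r \<Rightarrow> 'a list \<Rightarrow> bool) \<Rightarrow> 'r fm \<Rightarrow> (nat \<Rightarrow> 'a) set" where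
  "meaning M I p = {a \<in> assigns M. sat M I a p}"

definition models :: "'a set \<Rightarrow> ('r \<Rightarrow> 'a list \<Rightarrow> bool) \<Rightarrow> 'r fm \<Rightarrow> bool" where
  "models M I p = (\<forall>a\<in>assigns M. sat M I a p)"

definition non_dependent ::
  "'a set \<Rightarrow> ('r \<Rightarrow> 'a list \<Rightarrow> bool) \<Rightarrow> 'r fm \<Rightarrow> nat \<Rightarrow> 'r fm \<Rightarrow> bool" where
  "non_dependent M I p x th =
     (\<forall>a\<in>assigns M. \<forall>b\<in>M. sat M I a th \<longrightarrow> sat M I (a(x := b)) th \<longrightarrow>
        (sat M I a p \<longleftrightarrow> sat M I (a(x := b)) p))"

datatype bexp = BArg nat | BNeg bexp | BConj bexp bexp

fun bargs :: "bexp \<Rightarrow> nat set" where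
  "bargs (BArg i) = {i}"
| "bargs (BNeg e) = bargs e"
| "bargs (BConj e1 e2) = bargs e1 \<union> bargs e2"

text \<open>f(\<phi>_1,...,\<phi>_n): argument place i (0-based) is filled with ps ! i.\<close>
fun bapply :: "bexp \<Rightarrow> 'r fm list \<Rightarrow> 'r fm" where
  "bapply (BArg i) ps = ps ! i"
| "bapply (BNeg e) ps = Neg (bapply e ps)"
| "bapply (BConj e1 e2) ps = Conj (bapply e1 ps) (bapply e2 ps)"

text \<open>Quantifier prefix: the list [(Q_1,z_1),...,(Q_m,z_m)] (True = \<forall>, False = \<exists>)
applied to \<phi> gives Q_m z_m ... Q_1 z_1 \<phi> (first list element innermost).\<close>
fun quant :: "(bool \<times> nat) list \<Rightarrow> 'r fm \<Rightarrow> 'r fm" where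
  "quant [] p = p"
| "quant ((q, z) # qs) p = quant qs (if q then All z p else Ex z p)"

end

theory Submission
  imports Defs
begin

lemma coinc: "\<forall>v\<in>freevars p. a v = a' v \<Longrightarrow> sat M I a p = sat M I a' p"
proof (induction p arbitrary: a a')
  case (Rel R xs) then show ?case by (simp cong: map_cong)
next
  case (Conj p1 p2)
  have "sat M I a p1 = sat M I a' p1" "sat M I a p2 = sat M I a' p2"
    using Conj.prems by (auto intro!: Conj.IH)
  then show ?case by simp
next
  case (All z p)
  have "\<And>b. sat M I (a(z:=b)) p = sat M I (a'(z:=b)) p"
    using All by (intro All.IH) auto
  then show ?case by simp
qed auto

lemma assigns_upd: "a \<in> assigns M \<Longrightarrow> c \<in> M \<Longrightarrow> a(x:=c) \<in> assigns M"
  by (auto simp: assigns_def)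

lemma quant_lem:
  assumes "\<forall>(q, z) \<in> set qs. z \<noteq> x \<and> z \<notin> freevars th"
    and "\<And>a c. a \<in> assigns M \<Longrightarrow> c \<in> M \<Longrightarrow> sat M I (a(x:=c)) th \<Longrightarrow>
           sat M I a P = sat M I (a(x:=c)) P'"
  shows "a \<in> assigns M \<Longrightarrow> c \<in> M \<Longrightarrow> sat M I (a(x:=c)) th \<Longrightarrow>
           sat M I a (quant qs P) = sat M I (a(x:=c)) (quant qs P')"
  using assms
proof (induction qs arbitrary: P P' a c)
  case Nil then show ?case by simp
next
  case (Cons qz qs)
  obtain q z where qz: "qz = (q, z)" by force
  have zx: "z \<noteq> x" and zth: "z \<notin> freevars th" using Cons.prems(4) qz by auto
  have key: "sat M I (a(z:=d)) P = sat M I ((a(x:=c))(z:=d)) P'"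
    if a: "a \<in> assigns M" and c: "c \<in> M" and th: "sat M I (a(x:=c)) th" and d: "d \<in> M"
    for a c d
  proof -
    have e: "(a(z:=d))(x:=c) = (a(x:=c))(z:=d)" using zx by (auto simp: fun_upd_twist)
    have "sat M I ((a(z:=d))(x:=c)) th"
      using th zth e by (subst coinc[where a'="a(x:=c)"]) auto
    then show ?thesis using Cons.prems(5)[of "a(z:=d)" c] a c d e assigns_upd by metis
  qed
  have step: "sat M I a (if q then All z P else Ex z P) =
      sat M I (a(x:=c)) (if q then All z P' else Ex z P')"
    if a: "a \<in> assigns M" and c: "c \<in> M" and th: "sat M I (a(x:=c)) th" for a c
  proof -
    have "(\<forall>d\<in>M. sat M I (a(z:=d)) P) = (\<forall>d\<in>M. sat M I ((a(x:=c))(z:=d)) P')"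
         "(\<forall>d\<in>M. \<not> sat M I (a(z:=d)) P) = (\<forall>d\<in>M. \<not> sat M I ((a(x:=c))(z:=d)) P')"
      using key[OF a c th] by auto
    then show ?thesis unfolding Ex_def sat.simps by simp
  qed
  show ?case unfolding qz quant.simps
  proof (rule Cons.IH)
    show "\<forall>(q, z)\<in>set qs. z \<noteq> x \<and> z \<notin> freevars th" using Cons.prems(4) by simp
  next
    fix a c assume "a \<in> assigns M" "c \<in> M" "sat M I (a(x:=c)) th"
    then show "sat M I a (if q then All z P else Ex z P) =
      sat M I (a(x:=c)) (if q then All z P' else Ex z P')" by (rule step)
  qed (use Cons.prems in auto)
qed

lemma bapply_lem:
  assumes "bargs f \<subseteq> {..<length phis}"
    and "\<forall>p \<in> set phis. non_dependent M I p x th"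
    and "a \<in> assigns M" "c \<in> M" "sat M I (a(x:=c)) th"
  shows "sat M I a (bapply f (map (\<lambda>p. All x (Imp th p)) phis)) = sat M I (a(x:=c)) (bapply f phis)"
  using assms(1)
proof (induction f)
  case (BArg i)
  then have i: "i < length phis" by simp
  let ?p = "phis ! i"
  have nd: "non_dependent M I ?p x th" using assms(2) i by simp
  have "(\<forall>b\<in>M. sat M I (a(x:=b)) th \<longrightarrow> sat M I (a(x:=b)) ?p) = sat M I (a(x:=c)) ?p"
  proof
    assume "\<forall>b\<in>M. sat M I (a(x:=b)) th \<longrightarrow> sat M I (a(x:=b)) ?p"
    then show "sat M I (a(x:=c)) ?p" using assms(4,5) by blast
  next
    assume h: "sat M I (a(x:=c)) ?p"
    show "\<forall>b\<in>M. sat M I (a(x:=b)) th \<longrightarrow> sat M I (a(x:=b)) ?p"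
    proof (intro ballI impI)
      fix b assume b: "b \<in> M" "sat M I (a(x:=b)) th"
      have "a(x:=c) \<in> assigns M" using assms(3,4) assigns_upd by metis
      then show "sat M I (a(x:=b)) ?p"
        using nd h b assms(5) unfolding non_dependent_def by fastforce
    qed
  qed
  then show ?case using i by (simp add: Imp_def del: fun_upd_apply)
qed auto

theorem mainTheorem10:
  fixes M :: "'a set" and I :: "'r \<Rightarrow> 'a list \<Rightarrow> bool"
    and x :: nat and f :: bexp and th :: "'r fm" and phis :: "'r fm list"
    and qs :: "(bool \<times> nat) list"
  assumes "M \<noteq> {}"
    and "bargs f \<subseteq> {..<length phis}"
    and "\<forall>(q, z) \<in> set qs. z \<noteq> x \<and> z \<notin> freevars th"
    and "\<forall>p \<in> set phis. non_dependent M I p x th"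
  shows "meaning M I (Imp (Ex x th)
            (quant qs (bapply f (map (\<lambda>p. All x (Imp th p)) phis))))
         = meaning M I (All x (Imp th (quant qs (bapply f phis))))
         \<and> (models M I (Ex x th) \<longrightarrow>
         meaning M I (quant qs (bapply f (map (\<lambda>p. All x (Imp th p)) phis)))
         = meaning M I (All x (Imp th (quant qs (bapply f phis)))))"
proof -
  let ?L = "quant qs (bapply f (map (\<lambda>p. All x (Imp th p)) phis))"
  let ?R = "quant qs (bapply f phis)"
  have K: "sat M I a ?L = sat M I (a(x:=c)) ?R"
    if "a \<in> assigns M" "c \<in> M" "sat M I (a(x:=c)) th" for a c
    by (rule quant_lem[OF assms(3) bapply_lem[OF assms(2,4)]]) (use that in auto)
  have A: "sat M I a (Imp (Ex x th) ?L) = sat M I a (All x (Imp th ?R))"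
    if a: "a \<in> assigns M" for a
  proof (cases "\<exists>c\<in>M. sat M I (a(x:=c)) th")
    case True
    then obtain c where c: "c \<in> M" "sat M I (a(x:=c)) th" by blast
    show ?thesis using K[OF a c] K[OF a] True by (auto simp: Imp_def Ex_def)
  next
    case False then show ?thesis by (auto simp: Imp_def Ex_def)
  qed
  have B: "sat M I a (Imp (Ex x th) ?L) = sat M I a ?L"
    if "a \<in> assigns M" "models M I (Ex x th)" for a
    using that by (auto simp: models_def Imp_def)
  show ?thesis using A B unfolding meaning_def by auto
qed

end
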